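(* For every $n,k\ge1$ and $p\in[0,1]$, there is a randomized selection algorithm in the rank query model that runs in $k$ rounds, succeeds with probability $p$ on every input of length $n$, and issues an expected number of queries at most $np\frac{k+1}{2k}+1$ on every input.
   Context: Selection with rank queries: there is a vector $\vec{x}=(x_1,\ldots,x_n)$ whose ranks form an unknown permutation of $\{1,\ldots,n\}$; a rank $r$ is given and the goal is to output the index $i$ with $\mathrm{rank}(x_i)=r$. Queries have the form "How is $\mathrm{rank}(x_j)$ compared to $m$?", with answer "$<$", "$=$" or "$>$". An algorithm runs in $k$ rounds if in each of $k$ rounds it submits a set of queries chosen depending only on answers of earlier rounds (and its randomness), then receives all answers. A randomized algorithm is a distribution over deterministic algorithms; probabilities and expectations are over its randomness. *)

theory Defs
  imports "HOL-Probability.Probability" "HOL-Combinatorics.Permutations"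
begin

datatype answer = Lt | Eq | Gt

text \<open>A query (j, m) asks how rank(x_j) compares to m.\<close>
type_synonym query = "nat \<times> nat"

text \<open>The ranks of the input are given by a permutation sigma of {1..n}:
  sigma j = rank(x_j). Answer to query (j,m).\<close>
definition ans :: "(nat \<Rightarrow> nat) \<Rightarrow> query \<Rightarrow> answer" where
  "ans \<sigma> q = (if \<sigma> (fst q) < snd q then Lt else if \<sigma> (fst q) = snd q then Eq else Gt)"

text \<open>A transcript: for each completed round, the partial map from the queries
  asked in that round to their answers.\<close>
type_synonym transcript = "(query \<Rightarrow> answer option) list"

text \<open>A deterministic round-based algorithm: the set of queries of the next round is
  a function of the answers of earlier rounds; the output is a function of all answers.\<close>
record det_alg =
  qry :: "transcript \<Rightarrow> query set"
  out :: "transcript \<Rightarrow> nat"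

definition valid_alg :: "det_alg \<Rightarrow> bool" where
  "valid_alg A \<longleftrightarrow> (\<forall>t. finite (qry A t))"

fun run :: "det_alg \<Rightarrow> (nat \<Rightarrow> nat) \<Rightarrow> nat \<Rightarrow> transcript" where
  "run A \<sigma> 0 = []"
| "run A \<sigma> (Suc i) =
     (let t = run A \<sigma> i in t @ [\<lambda>q. if q \<in> qry A t then Some (ans \<sigma> q) else None])"

definition num_queries :: "det_alg \<Rightarrow> (nat \<Rightarrow> nat) \<Rightarrow> nat \<Rightarrow> nat" where
  "num_queries A \<sigma> k = (\<Sum>i<k. card (qry A (run A \<sigma> i)))"

definition alg_output :: "det_alg \<Rightarrow> (nat \<Rightarrow> nat) \<Rightarrow> nat \<Rightarrow> nat" where
  "alg_output A \<sigma> k = out A (run A \<sigma> k)"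

definition succeeds :: "nat \<Rightarrow> nat \<Rightarrow> det_alg \<Rightarrow> (nat \<Rightarrow> nat) \<Rightarrow> nat \<Rightarrow> bool" where
  "succeeds n r A \<sigma> k \<longleftrightarrow> alg_output A \<sigma> k \<in> {1..n} \<and> \<sigma> (alg_output A \<sigma> k) = r"

end

theory Submission
  imports Defs
begin

definition found :: "nat \<Rightarrow> transcript \<Rightarrow> nat set" where
  "found r t = {j. \<exists>x\<in>set t. x (j, r) = Some Eq}"

definition blk :: "nat \<Rightarrow> nat \<Rightarrow> nat \<Rightarrow> nat \<Rightarrow> nat" where
  "blk n k s j = ((j + s) mod n) div ((n + k - 1) div k)"

definition salg :: "nat \<Rightarrow> nat \<Rightarrow> nat \<Rightarrow> nat \<Rightarrow> det_alg" where
  "salg n k r s = \<lparr>qry = (\<lambda>t. if found r t = {} then (\<lambda>j. (j, r)) ` {j\<in>{1..n}. blk n k s j = length t} else {}),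
                   out = (\<lambda>t. SOME j. j \<in> found r t)\<rparr>"

definition triv :: det_alg where "triv = \<lparr>qry = (\<lambda>_. {}), out = (\<lambda>_. 0)\<rparr>"

lemma found_snoc: "found r (xs @ [f]) = found r xs \<union> {j. f (j, r) = Some Eq}"
  unfolding found_def by auto

lemma length_run[simp]: "length (run A \<sigma> i) = i"
  by (induction i) (auto simp: Let_def)

lemma run_found:
  assumes "\<sigma> permutes {1..n}" "t0 \<in> {1..n}" "\<sigma> t0 = r"
  shows "found r (run (salg n k r s) \<sigma> i) = (if blk n k s t0 < i then {t0} else {})"
proof (induction i)
  case 0
  then show ?case by (simp add: found_def)
next
  case (Suc i)
  have inj: "inj \<sigma>" using assms(1) permutes_inj by blast
  let ?A = "salg n k r s"
  let ?t = "run ?A \<sigma> i"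
  have run: "run ?A \<sigma> (Suc i) = ?t @ [\<lambda>q. if q \<in> qry ?A ?t then Some (ans \<sigma> q) else None]"
    by (simp add: Let_def)
  show ?case
  proof (cases "blk n k s t0 < i")
    case True
    then have "qry ?A ?t = {}" using Suc.IH by (simp add: salg_def)
    then show ?thesis using True Suc.IH by (simp only: run found_snoc) auto
  next
    case False
    then have q: "qry ?A ?t = (\<lambda>j. (j, r)) ` {j\<in>{1..n}. blk n k s j = i}" using Suc.IH by (simp add: salg_def)
    have "{j. (if (j, r) \<in> qry ?A ?t then Some (ans \<sigma> (j, r)) else None) = Some Eq}
        = {j\<in>{1..n}. blk n k s j = i \<and> \<sigma> j = r}"
      unfolding q by (auto simp: ans_def)
    also have "\<dots> = (if blk n k s t0 = i then {t0} else {})"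
      using assms inj by (auto dest: injD)
    finally show ?thesis using False Suc.IH by (simp only: run found_snoc) auto
  qed
qed

lemma blk_lt: assumes "n > 0" "k > 0" shows "blk n k s j < k"
proof -
  let ?b = "(n + k - 1) div k"
  have e: "?b * k + (n + k - 1) mod k = n + k - 1" by (rule div_mult_mod_eq)
  have "(n + k - 1) mod k < k" using assms by simp
  then have "n \<le> ?b * k" using e assms by linarith
  moreover have "(j + s) mod n < n" using assms by simp
  ultimately have "(j + s) mod n < k * ?b" by (simp add: mult.commute)
  moreover have bpos: "?b > 0" using assms by (simp add: div_greater_zero_iff)
  ultimately have "(j + s) mod n div ?b < k" using div_less_iff_less_mult[OF bpos, of "(j + s) mod n" k]
    by (simp add: mult.commute)
  then show ?thesis unfolding blk_def .
qed

lemma inj_shift: assumes "n > 0" shows "inj_on (\<lambda>x. (x + c) mod n) {a..<a+(n::nat)}"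
proof (rule inj_onI)
  fix x y assume x: "x \<in> {a..<a+n}" and y: "y \<in> {a..<a+n}" and e: "(x + c) mod n = (y + c) mod n"
  show "x = y"
  proof (cases "x \<le> y")
    case True
    then have d: "n dvd (y + c) - (x + c)" using e mod_eq_dvd_iff_nat[of "x + c" "y + c" n] by simp
    have l: "y - x < n" using x y by auto
    have "y - x = 0"
    proof (rule ccontr)
      assume "y - x \<noteq> 0"
      then have "\<not> n dvd y - x" using nat_dvd_not_less l by simp
      then show False using d by simp
    qed
    then show ?thesis using True by simp
  next
    case False
    then have d: "n dvd (x + c) - (y + c)" using e mod_eq_dvd_iff_nat[of "y + c" "x + c" n] by simp
    have l: "x - y < n" using x y by auto
    have "x - y = 0"
    proof (rule ccontr)
      assume "x - y \<noteq> 0"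
      then have "\<not> n dvd x - y" using nat_dvd_not_less l by simp
      then show False using d by simp
    qed
    then show ?thesis using False by simp
  qed
qed

lemma bij_shift: assumes "n > 0" shows "bij_betw (\<lambda>x. (x + c) mod n) {a..<a+n} {..<(n::nat)}"
proof -
  have i: "inj_on (\<lambda>x. (x + c) mod n) {a..<a+n}" by (rule inj_shift[OF assms])
  have s: "(\<lambda>x. (x + c) mod n) ` {a..<a+n} \<subseteq> {..<n}" using assms by auto
  have "card ((\<lambda>x. (x + c) mod n) ` {a..<a+n}) = card {..<n}" using card_image[OF i] by simp
  then have "(\<lambda>x. (x + c) mod n) ` {a..<a+n} = {..<n}" using card_subset_eq[OF finite_lessThan s] by blast
  then show ?thesis using i by (simp add: bij_betw_def)
qed

lemma pos_card: fixes n s :: nat assumes "n > 0"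
  shows "card {j\<in>{1..n}. P ((j + s) mod n)} = card {p\<in>{..<n}. P p}"
proof -
  let ?f = "\<lambda>x. (x + s) mod n"
  have "bij_betw ?f {1..<1+n} {..<n}" by (rule bij_shift[OF assms])
  moreover have "{1..<1+n} = {1..n}" by auto
  ultimately have b: "bij_betw ?f {1..n} {..<n}" by simp
  have "?f ` {j\<in>{1..n}. P (?f j)} = {p \<in> ?f ` {1..n}. P p}" by auto
  also have "\<dots> = {p\<in>{..<n}. P p}" using b by (simp add: bij_betw_def)
  finally have img: "?f ` {j\<in>{1..n}. P (?f j)} = {p\<in>{..<n}. P p}" .
  have "bij_betw ?f {j\<in>{1..n}. P (?f j)} {p\<in>{..<n}. P p}"
    by (rule bij_betw_subset[OF b _ img]) auto
  then show ?thesis by (rule bij_betw_same_card)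
qed

lemma qry_card:
  assumes "\<sigma> permutes {1..n}" "t0 \<in> {1..n}" "\<sigma> t0 = r"
  shows "card (qry (salg n k r s) (run (salg n k r s) \<sigma> i))
       = (if blk n k s t0 < i then 0 else card {j\<in>{1..n}. blk n k s j = i})"
proof -
  have inj: "inj_on (\<lambda>j. (j, r)) A" for A :: "nat set" by (simp add: inj_on_def)
  show ?thesis using run_found[OF assms, of k s i]
    by (simp add: salg_def card_image[OF inj])
qed

lemma sum_fib: assumes "finite A"
  shows "(\<Sum>i\<le>B. card {j\<in>A. g j = (i::nat)}) = card {j\<in>A. g j \<le> B}"
proof (induction B)
  case 0
  then show ?case by simp
next
  case (Suc B)
  have "{j\<in>A. g j \<le> Suc B} = {j\<in>A. g j \<le> B} \<union> {j\<in>A. g j = Suc B}" by auto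
  then have "card {j\<in>A. g j \<le> Suc B} = card {j\<in>A. g j \<le> B} + card {j\<in>A. g j = Suc B}"
    using assms by (simp add: card_Un_disjoint disjoint_iff)
  then show ?case using Suc.IH by simp
qed

lemma numq:
  assumes "\<sigma> permutes {1..n}" "t0 \<in> {1..n}" "\<sigma> t0 = r" "n > 0" "k > 0"
  shows "num_queries (salg n k r s) \<sigma> k = card {j\<in>{1..n}. blk n k s j \<le> blk n k s t0}"
proof -
  let ?B = "blk n k s t0"
  have B: "?B < k" using blk_lt assms by blast
  have "num_queries (salg n k r s) \<sigma> k = (\<Sum>i<k. if i \<le> ?B then card {j\<in>{1..n}. blk n k s j = i} else 0)"
    unfolding num_queries_def by (rule sum.cong) (auto simp: qry_card[OF assms(1-3)])
  also have "\<dots> = (\<Sum>i\<in>{i\<in>{..<k}. i \<le> ?B}. card {j\<in>{1..n}. blk n k s j = i})"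
    using sum.inter_filter[of "{..<k}" "\<lambda>i. card {j\<in>{1..n}. blk n k s j = i}" "\<lambda>i. i \<le> ?B"] by simp
  also have "{i\<in>{..<k}. i \<le> ?B} = {..?B}" using B by auto
  also have "(\<Sum>i\<le>?B. card {j\<in>{1..n}. blk n k s j = i}) = card {j\<in>{1..n}. blk n k s j \<le> ?B}"
    by (rule sum_fib) simp
  finally show ?thesis .
qed

lemma card_filter_sum: "finite A \<Longrightarrow> card {p\<in>A. P p} = (\<Sum>p\<in>A. if P p then 1 else (0::nat))"
  using sum.inter_filter[of A "\<lambda>_. 1::nat" P] by simp

lemma card_div_le: assumes "b > 0" shows "card {p\<in>{..<n}. p div b = (c::nat)} \<le> b"
proof -
  have "{p\<in>{..<n}. p div b = c} \<subseteq> {c*b..<c*b+b}"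
  proof
    fix p assume "p \<in> {p\<in>{..<n}. p div b = c}"
    then have "p div b = c" by simp
    moreover have "p div b * b + p mod b = p" by (rule div_mult_mod_eq)
    moreover have "p mod b < b" using assms by simp
    ultimately show "p \<in> {c*b..<c*b+b}" by auto
  qed
  then have "card {p\<in>{..<n}. p div b = c} \<le> card {c*b..<c*b+b}" by (rule card_mono[rotated]) simp
  then show ?thesis by simp
qed

lemma sum_one_plus: "(\<Sum>p<n. 1 + (if P p then 1 else 0::nat)) = n + card {p\<in>{..<n}. P p}"
proof -
  have "(\<Sum>p<n. 1 + (if P p then 1 else 0::nat)) = n + (\<Sum>p<n. (if P p then 1 else 0::nat))"
    by (simp only: sum.distrib) simp
  also have "\<dots> = n + card {p\<in>{..<n}. P p}" by (simp only: card_filter_sum[of "{..<n}" P] finite_lessThan)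
  finally show ?thesis .
qed

lemma cost_bound: assumes "b > 0"
  shows "2 * (\<Sum>q<n. card {p\<in>{..<n}. p div b \<le> q div (b::nat)}) \<le> n * n + n * b"
proof -
  let ?X = "\<Sum>q<n. \<Sum>p<n. (if p div b \<le> q div b then 1 else 0::nat)"
  let ?Y = "\<Sum>q<n. \<Sum>p<n. (if q div b \<le> p div b then 1 else 0::nat)"
  have X: "(\<Sum>q<n. card {p\<in>{..<n}. p div b \<le> q div (b::nat)}) = ?X"
    by (rule sum.cong[OF refl], rule card_filter_sum) simp
  have XY: "?Y = ?X" by (rule sum.swap)
  have "?X + ?Y = (\<Sum>q<n. \<Sum>p<n. (if p div b \<le> q div b then 1 else 0::nat) + (if q div b \<le> p div b then 1 else 0))"
    by (simp add: sum.distrib)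
  also have "\<dots> = (\<Sum>q<n. \<Sum>p<n. 1 + (if p div b = q div b then 1 else 0::nat))"
    by (intro sum.cong refl) auto
  also have "\<dots> = (\<Sum>q<n. n + card {p\<in>{..<n}. p div b = q div b})"
    by (simp only: sum_one_plus)
  also have "\<dots> \<le> (\<Sum>q<n. n + b)"
    by (intro sum_mono add_left_mono card_div_le assms)
  also have "\<dots> = n * n + n * b" by (simp add: algebra_simps)
  finally show ?thesis using X XY by simp
qed

lemma succ_salg:
  assumes "\<sigma> permutes {1..n}" "t0 \<in> {1..n}" "\<sigma> t0 = r" "n > 0" "k > 0"
  shows "succeeds n r (salg n k r s) \<sigma> k"
proof -
  have "found r (run (salg n k r s) \<sigma> k) = {t0}"
    using run_found[OF assms(1-3), of k s k] blk_lt[OF assms(4,5)] by simp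
  then have "alg_output (salg n k r s) \<sigma> k = t0"
    unfolding alg_output_def by (simp add: salg_def)
  then show ?thesis using assms unfolding succeeds_def by simp
qed

lemma cost_salg:
  assumes "\<sigma> permutes {1..n}" "t0 \<in> {1..n}" "\<sigma> t0 = r" "n > 0" "k > 0"
  shows "num_queries (salg n k r s) \<sigma> k
       = card {p\<in>{..<n}. p div ((n + k - 1) div k) \<le> ((t0 + s) mod n) div ((n + k - 1) div k)}"
  unfolding numq[OF assms] blk_def by (rule pos_card[OF assms(4)])

lemma sum_cost:
  fixes n t0 :: nat
  assumes "n > 0"
  shows "(\<Sum>s<n. g ((t0 + s) mod n)) = (\<Sum>q<n. (g q :: nat))"
proof -
  have b: "bij_betw (\<lambda>s. (s + t0) mod n) {0..<0+n} {..<n}" by (rule bij_shift[OF assms])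
  have "{0..<0+n} = {..<n}" by auto
  with b have "bij_betw (\<lambda>s. (s + t0) mod n) {..<n} {..<n}" by simp
  from sum.reindex_bij_betw[OF this, of g] show ?thesis by (simp add: add.commute)
qed

lemma real_bound:
  fixes n k b T :: nat and p :: real
  assumes "n \<ge> 1" "k \<ge> 1" "0 \<le> p" "p \<le> 1"
    and T: "2 * T \<le> n * n + n * b" and b: "b * k \<le> n + k - 1"
  shows "real T / real n * p \<le> real n * p * (real k + 1) / (2 * real k) + 1"
proof -
  have npos: "real n > 0" using assms by simp
  have kpos: "real k > 0" using assms by simp
  have "real (2 * T) \<le> real (n * n + n * b)" using T by (simp only: of_nat_le_iff)
  then have "2 * real T \<le> real n * (real n + real b)" by (simp add: algebra_simps)
  then have h1: "real T / real n \<le> (real n + real b) / 2" using npos by (simp add: field_simps)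
  have "b * k \<le> n + k" using b by linarith
  then have "real (b * k) \<le> real (n + k)" by (simp only: of_nat_le_iff)
  then have "real b * real k \<le> real n + real k" by simp
  then have h2: "real b \<le> real n / real k + 1" using kpos by (simp add: field_simps)
  have h3: "(real n + real b) / 2 \<le> real n * (real k + 1) / (2 * real k) + 1 / 2"
    using h2 kpos by (simp add: field_simps)
  have h4: "real T / real n \<le> real n * (real k + 1) / (2 * real k) + 1 / 2" using h1 h3 by linarith
  have "real T / real n * p \<le> (real n * (real k + 1) / (2 * real k) + 1 / 2) * p"
    using mult_right_mono[OF h4 assms(3)] .
  also have "\<dots> = real n * p * (real k + 1) / (2 * real k) + p / 2" by (simp add: field_simps)
  also have "\<dots> \<le> real n * p * (real k + 1) / (2 * real k) + 1" using assms by simp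
  finally show ?thesis .
qed

theorem proposition12:
  fixes n k :: nat and p :: real
  assumes "n \<ge> 1" and "k \<ge> 1" and "0 \<le> p" and "p \<le> 1"
  shows "\<exists>D :: nat \<Rightarrow> det_alg pmf.
           \<forall>r \<in> {1..n}.
             (\<forall>A \<in> set_pmf (D r). valid_alg A) \<and>
             (\<forall>\<sigma>. \<sigma> permutes {1..n} \<longrightarrow>
                measure_pmf.prob (D r) {A. succeeds n r A \<sigma> k} \<ge> p \<and>
                (\<integral>\<^sup>+ A. ennreal (real (num_queries A \<sigma> k)) \<partial>measure_pmf (D r))
                  \<le> ennreal (real n * p * (real k + 1) / (2 * real k) + 1))"
proof -
  define F where "F r c = (if c then map_pmf (salg n k r) (pmf_of_set {..<n}) else return_pmf triv)" for r c
  define D where "D r = bind_pmf (bernoulli_pmf p) (F r)" for r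
  have n0: "n > 0" and k0: "k > 0" using assms by auto
  have valid: "valid_alg A" if "A \<in> set_pmf (D r)" for A r
  proof -
    have "A \<in> range (salg n k r) \<or> A = triv" using that n0
      by (auto simp: D_def F_def split: if_splits)
    then show ?thesis by (auto simp: valid_alg_def salg_def triv_def)
  qed
  have main: "measure_pmf.prob (D r) {A. succeeds n r A \<sigma> k} \<ge> p \<and>
              (\<integral>\<^sup>+ A. ennreal (real (num_queries A \<sigma> k)) \<partial>measure_pmf (D r))
                  \<le> ennreal (real n * p * (real k + 1) / (2 * real k) + 1)"
    if r: "r \<in> {1..n}" and sig: "\<sigma> permutes {1..n}" for r \<sigma>
  proof -
    have "r \<in> \<sigma> ` {1..n}" using permutes_image[OF sig] r by simp
    then obtain t0 where t0: "t0 \<in> {1..n}" "\<sigma> t0 = r" by auto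
    let ?S = "{A. succeeds n r A \<sigma> k}"
    have "salg n k r -` ?S = UNIV" using succ_salg[OF sig t0 n0 k0] by auto
    then have e1: "emeasure (measure_pmf (F r True)) ?S = 1" by (simp add: F_def)
    have "emeasure (measure_pmf (D r)) ?S
        = emeasure (measure_pmf (F r True)) ?S * ennreal p + emeasure (measure_pmf (F r False)) ?S * ennreal (1 - p)"
      unfolding D_def using assms(3,4) by simp
    also have "\<dots> \<ge> ennreal p" using e1 by simp
    finally have "ennreal p \<le> ennreal (measure_pmf.prob (D r) ?S)"
      by (simp add: measure_pmf.emeasure_eq_measure)
    then have P1: "p \<le> measure_pmf.prob (D r) ?S" by (simp add: ennreal_le_iff)
    let ?b = "(n + k - 1) div k"
    let ?C = "\<lambda>q. card {p\<in>{..<n}. p div ?b \<le> q div ?b}"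
    define T where "T = (\<Sum>q<n. ?C q)"
    have bpos: "?b > 0" using n0 k0 by (simp add: div_greater_zero_iff)
    have sumT: "(\<Sum>s<n. num_queries (salg n k r s) \<sigma> k) = T"
      unfolding T_def cost_salg[OF sig t0 n0 k0] by (rule sum_cost[OF n0])
    have "(\<integral>\<^sup>+ A. ennreal (real (num_queries A \<sigma> k)) \<partial>measure_pmf (F r True))
        = (\<Sum>s<n. ennreal (real (num_queries (salg n k r s) \<sigma> k))) / of_nat n"
      unfolding F_def using n0 by (simp only: if_True nn_integral_map_pmf, subst nn_integral_pmf_of_set) auto
    also have "(\<Sum>s<n. ennreal (real (num_queries (salg n k r s) \<sigma> k))) = ennreal (real T)"
      by (simp add: sumT[symmetric])
    also have "ennreal (real T) / of_nat n = ennreal (real T / real n)"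
      using n0 by (subst ennreal_of_nat_eq_real_of_nat, subst divide_ennreal) auto
    finally have I1: "(\<integral>\<^sup>+ A. ennreal (real (num_queries A \<sigma> k)) \<partial>measure_pmf (F r True)) = ennreal (real T / real n)" .
    have I0: "(\<integral>\<^sup>+ A. ennreal (real (num_queries A \<sigma> k)) \<partial>measure_pmf (F r False)) = 0"
      by (simp add: F_def triv_def num_queries_def)
    have "(\<integral>\<^sup>+ A. ennreal (real (num_queries A \<sigma> k)) \<partial>measure_pmf (D r))
        = ennreal (real T / real n) * ennreal p"
      unfolding D_def using assms(3,4) by (simp add: I1 I0)
    also have "\<dots> = ennreal (real T / real n * p)" using assms(3) by (subst ennreal_mult) auto
    also have "\<dots> \<le> ennreal (real n * p * (real k + 1) / (2 * real k) + 1)"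
    proof (rule ennreal_leI, rule real_bound[OF assms])
      show "2 * T \<le> n * n + n * ?b" unfolding T_def by (rule cost_bound[OF bpos])
      show "?b * k \<le> n + k - 1" by simp
    qed
    finally show ?thesis using P1 by simp
  qed
  show ?thesis
    by (rule exI[of _ D]) (use valid main in blast)
qed

end
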